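(* Let $\alpha,\beta,\gamma,\lambda,x$ be non-negative integers with $(\alpha,\beta,\gamma,\lambda,x)\neq(0,0,0,0,0)$. Then for every integer $n\ge0$, $$T_{n+1}^{\lambda,x}(\alpha,\beta,\gamma)=\gamma\,T_n^{\lambda,x}(\alpha,\beta,\gamma-\alpha)+x\lambda\beta\sum_{s=0}^{n}\binom{n}{s}(\gamma|\alpha)_s\,T_{n-s}^{\lambda+1,x}(\alpha,\beta,\beta-\alpha).$$
   Context: For complex numbers $c,\alpha$ and an integer $n\ge 0$ let $(c|\alpha)_n=\prod_{i=0}^{n-1}(c-i\alpha)$, with $(c|\alpha)_0=1$. Let $E_{\alpha,c}(t)=\sum_{n\ge 0}(c|\alpha)_n\,t^n/n!$, viewed as a formal power series in $t$. It equals $(1+\alpha t)^{c/\alpha}$ if $\alpha\neq0$ and $e^{ct}$ if $\alpha=0$. For complex $\alpha,\beta,\gamma,x$ and a non-negative integer $\lambda$, the numbers $T_n^{\lambda,x}(\alpha,\beta,\gamma)$, $n\ge0$, are defined by the formal power series identity $$\sum_{n\ge0}T_n^{\lambda,x}(\alpha,\beta,\gamma)\frac{t^n}{n!}=E_{\alpha,\gamma}(t)\,\bigl(1-x(E_{\alpha,\beta}(t)-1)\bigr)^{-\lambda}.$$ The third argument may be any complex number. *)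

theory Defs
  imports "HOL-Computational_Algebra.Formal_Power_Series"
begin

definition gfall :: "complex \<Rightarrow> complex \<Rightarrow> nat \<Rightarrow> complex" where
  "gfall c a n = (\<Prod>i<n. c - of_nat i * a)"

definition E_fps :: "complex \<Rightarrow> complex \<Rightarrow> complex fps" where
  "E_fps a c = Abs_fps (\<lambda>n. gfall c a n / fact n)"

text \<open>The base series has constant coefficient 1, so inverse is the genuine inverse.\<close>
definition T :: "nat \<Rightarrow> complex \<Rightarrow> complex \<Rightarrow> complex \<Rightarrow> complex \<Rightarrow> nat \<Rightarrow> complex" where
  "T lam x a b g n = fact n * fps_nth
     (E_fps a g * inverse ((1 - fps_const x * (E_fps a b - 1)) ^ lam)) n"

end

theory Submission
  imports Defs
begin

unbundle fps_syntax

lemma gfall_Suc: "gfall c a (Suc n) = c * gfall (c - a) a n"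
  unfolding gfall_def prod.lessThan_Suc_shift by (simp add: algebra_simps del: prod.lessThan_Suc)

lemma E_deriv: "fps_deriv (E_fps a c) = fps_const c * E_fps a (c - a)"
proof (rule fps_ext)
  fix n
  have "fact (Suc n) = (of_nat (Suc n) :: complex) * fact n" by simp
  then show "fps_deriv (E_fps a c) $ n = (fps_const c * E_fps a (c - a)) $ n"
    by (simp add: E_fps_def gfall_Suc field_simps del: fact_Suc of_nat_Suc)
qed

lemma E0: "E_fps a c $ 0 = 1"
  by (simp add: E_fps_def gfall_def)

lemma general:
  fixes a b g x :: complex and lam n :: nat
  shows "T lam x a b g (Suc n) = g * T lam x a b (g - a) n
    + x * of_nat lam * b *
      (\<Sum>s=0..n. of_nat (n choose s) * gfall g a s * T (Suc lam) x a b (b - a) (n - s))"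
proof -
  define D where "D = 1 - fps_const x * (E_fps a b - 1)"
  define G where "G = inverse D"
  have D0: "D $ 0 = 1" by (simp add: D_def E0)
  have Dd: "fps_deriv D = - fps_const (x * b) * E_fps a (b - a)"
    by (simp add: D_def E_deriv fps_const_mult[symmetric] del: fps_const_mult)
  have Gd: "fps_deriv G = fps_const (x * b) * E_fps a (b - a) * G^2"
    using fps_inverse_deriv[of D] D0 by (simp add: G_def Dd fps_const_neg[symmetric] del: fps_const_neg)
  have inv: "\<And>k. inverse (D ^ k) = G ^ k" by (simp add: G_def fps_inverse_power)
  have Tdef: "\<And>l c m. T l x a b c m = fact m * (E_fps a c * G ^ l) $ m"
    by (simp add: T_def D_def[symmetric] inv)
  have key: "fps_deriv (E_fps a g * G ^ lam) =
     fps_const g * (E_fps a (g - a) * G ^ lam)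
     + fps_const (x * of_nat lam * b) * (E_fps a g * (E_fps a (b - a) * G ^ Suc lam))"
  proof (cases lam)
    case 0 then show ?thesis by (simp add: E_deriv)
  next
    case (Suc m)
    have "G ^ m * G\<^sup>2 = G ^ Suc (Suc m)" by (simp add: power2_eq_square)
    then show ?thesis
      by (simp add: Suc E_deriv fps_deriv_power Gd algebra_simps fps_const_mult[symmetric]
            del: fps_const_mult power_Suc)
       (simp add: power2_eq_square algebra_simps)
  qed
  have "T lam x a b g (Suc n) = fact n * fps_deriv (E_fps a g * G ^ lam) $ n"
    unfolding Tdef fps_deriv_nth by (simp only: Suc_eq_plus1[symmetric] fact_Suc of_nat_mult mult_ac)
  also have "\<dots> = g * T lam x a b (g - a) n
      + x * of_nat lam * b * (fact n * (E_fps a g * (E_fps a (b - a) * G ^ Suc lam)) $ n)"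
    unfolding key Tdef fps_add_nth fps_mult_left_const_nth by (simp add: algebra_simps del: power_Suc)
  also have "fact n * (E_fps a g * (E_fps a (b - a) * G ^ Suc lam)) $ n
     = (\<Sum>s=0..n. of_nat (n choose s) * gfall g a s * T (Suc lam) x a b (b - a) (n - s))"
    unfolding fps_mult_nth[of "E_fps a g"] sum_distrib_left
  proof (rule sum.cong[OF refl])
    fix s assume "s \<in> {0..n}"
    then have sn: "s \<le> n" by simp
    show "fact n * (E_fps a g $ s * (E_fps a (b - a) * G ^ Suc lam) $ (n - s)) =
      of_nat (n choose s) * gfall g a s * T (Suc lam) x a b (b - a) (n - s)"
      unfolding Tdef binomial_fact[OF sn] by (simp add: E_fps_def del: power_Suc)
  qed
  finally show ?thesis .
qed

theorem theorem7:
  fixes \<alpha> \<beta> \<gamma> lam x n :: nat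
  assumes "(\<alpha>, \<beta>, \<gamma>, lam, x) \<noteq> (0, 0, 0, 0, 0)"
  shows "T lam (of_nat x) (of_nat \<alpha>) (of_nat \<beta>) (of_nat \<gamma>) (Suc n) =
    of_nat \<gamma> * T lam (of_nat x) (of_nat \<alpha>) (of_nat \<beta>) (of_nat \<gamma> - of_nat \<alpha>) n
    + of_nat x * of_nat lam * of_nat \<beta> *
      (\<Sum>s=0..n. of_nat (n choose s) * gfall (of_nat \<gamma>) (of_nat \<alpha>) s *
         T (Suc lam) (of_nat x) (of_nat \<alpha>) (of_nat \<beta>) (of_nat \<beta> - of_nat \<alpha>) (n - s))"
  by (rule general)

end
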